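(* Let $M$ be a matroid obtained from a binary matroid $N$ by relaxing a circuit-hyperplane $X$ of $N$. Suppose $M$ has a minor isomorphic to the whirl $\mathcal{W}^k$ for some $k\ge 3$. Then, for every minor $M_1$ of $M$ isomorphic to $\mathcal{W}^k$, every rim element of $M_1$ lies in $X$ and no element of $X$ is a spoke of $M_1$.
   Context: Relaxing a circuit-hyperplane $X$ of $N$ means forming the matroid on $E(N)$ whose bases are the bases of $N$ together with $X$. For $k\ge 3$, the wheel $W_k$ is the graph consisting of a $k$-cycle (the rim) together with a new vertex (the hub) joined to every vertex of the cycle (these edges are the spokes); the rim is a circuit-hyperplane of the cycle matroid $M(W_k)$, and the whirl $\mathcal{W}^k$ is the matroid obtained from $M(W_k)$ by relaxing the rim. The rim elements and spokes of $\mathcal{W}^k$ are those of $W_k$ (for $k\ge3$ this partition is preserved by all automorphisms, so it is well-defined in any minor isomorphic to $\mathcal{W}^k$). *)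

theory Defs
  imports Main "HOL-Library.Z2"
begin

definition matroid :: "'a set \<Rightarrow> ('a set \<Rightarrow> bool) \<Rightarrow> bool" where
  "matroid E indep \<longleftrightarrow>
     finite E \<and>
     (\<forall>Y. indep Y \<longrightarrow> Y \<subseteq> E) \<and>
     indep {} \<and>
     (\<forall>Y Z. indep Z \<and> Y \<subseteq> Z \<longrightarrow> indep Y) \<and>
     (\<forall>Y Z. indep Y \<and> indep Z \<and> card Y < card Z \<longrightarrow>
        (\<exists>e \<in> Z - Y. indep (insert e Y)))"

definition bases :: "'a set \<Rightarrow> ('a set \<Rightarrow> bool) \<Rightarrow> 'a set set" where
  "bases E indep = {B. B \<subseteq> E \<and> indep B \<and> (\<forall>B'. B \<subset> B' \<and> B' \<subseteq> E \<longrightarrow> \<not> indep B')}"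

definition rank :: "('a set \<Rightarrow> bool) \<Rightarrow> 'a set \<Rightarrow> nat" where
  "rank indep Y = Max {card J | J. J \<subseteq> Y \<and> indep J}"

definition circuit :: "'a set \<Rightarrow> ('a set \<Rightarrow> bool) \<Rightarrow> 'a set \<Rightarrow> bool" where
  "circuit E indep C \<longleftrightarrow> C \<subseteq> E \<and> \<not> indep C \<and> (\<forall>D. D \<subset> C \<longrightarrow> indep D)"

definition flat :: "'a set \<Rightarrow> ('a set \<Rightarrow> bool) \<Rightarrow> 'a set \<Rightarrow> bool" where
  "flat E indep F \<longleftrightarrow> F \<subseteq> E \<and> (\<forall>e \<in> E - F. rank indep (insert e F) > rank indep F)"

definition hyperplane :: "'a set \<Rightarrow> ('a set \<Rightarrow> bool) \<Rightarrow> 'a set \<Rightarrow> bool" where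
  "hyperplane E indep H \<longleftrightarrow> flat E indep H \<and> rank indep H + 1 = rank indep E"

definition circuit_hyperplane :: "'a set \<Rightarrow> ('a set \<Rightarrow> bool) \<Rightarrow> 'a set \<Rightarrow> bool" where
  "circuit_hyperplane E indep X \<longleftrightarrow> circuit E indep X \<and> hyperplane E indep X"

definition relax :: "'a set \<Rightarrow> ('a set \<Rightarrow> bool) \<Rightarrow> 'a set \<Rightarrow> ('a set \<Rightarrow> bool)" where
  "relax E indep X = (\<lambda>Y. \<exists>B \<in> insert X (bases E indep). Y \<subseteq> B)"

text \<open>Binary: representable over GF(2) (the field bit), i.e. there are vectors v e
  (with coordinates indexed by nat) such that Y is independent iff the family
  (v e)_{e in Y} is linearly independent over GF(2), i.e. no nonempty subfamily sums to 0.\<close>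
definition binary :: "'a set \<Rightarrow> ('a set \<Rightarrow> bool) \<Rightarrow> bool" where
  "binary E indep \<longleftrightarrow> matroid E indep \<and>
     (\<exists>v :: 'a \<Rightarrow> nat \<Rightarrow> bit. \<forall>Y \<subseteq> E.
        indep Y \<longleftrightarrow> (\<forall>S \<subseteq> Y. S \<noteq> {} \<longrightarrow> (\<lambda>i. \<Sum>x\<in>S. v x i) \<noteq> (\<lambda>i. 0)))"

text \<open>Minors: M / C \ D for disjoint C, D subsets of E.  Y is independent in M / C iff
  r(Y \<union> C) = |Y| + r(C).\<close>
definition minor ::
  "'a set \<Rightarrow> ('a set \<Rightarrow> bool) \<Rightarrow> 'a set \<Rightarrow> ('a set \<Rightarrow> bool) \<Rightarrow> bool" where
  "minor E indep E1 indep1 \<longleftrightarrow>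
     (\<exists>C D. C \<subseteq> E \<and> D \<subseteq> E \<and> C \<inter> D = {} \<and> E1 = E - C - D \<and>
        (\<forall>Y. indep1 Y \<longleftrightarrow> Y \<subseteq> E1 \<and> rank indep (Y \<union> C) = card Y + rank indep C))"

definition iso_map ::
  "('a \<Rightarrow> 'b) \<Rightarrow> 'a set \<Rightarrow> ('a set \<Rightarrow> bool) \<Rightarrow> 'b set \<Rightarrow> ('b set \<Rightarrow> bool) \<Rightarrow> bool" where
  "iso_map f E1 indep1 E2 indep2 \<longleftrightarrow>
     bij_betw f E1 E2 \<and> (\<forall>Y \<subseteq> E1. indep1 Y \<longleftrightarrow> indep2 (f ` Y))"

text \<open>An edge set F is independent (a forest) iff no edge e in F lies on a cycle of F,
  i.e. the endpoints of e are not joined by a path in F - {e}.\<close>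
definition adj :: "('e \<Rightarrow> 'v \<times> 'v) \<Rightarrow> 'e set \<Rightarrow> ('v \<times> 'v) set" where
  "adj ends F = {(a, b). \<exists>e \<in> F. ends e = (a, b) \<or> ends e = (b, a)}"

definition cycle_indep :: "'e set \<Rightarrow> ('e \<Rightarrow> 'v \<times> 'v) \<Rightarrow> 'e set \<Rightarrow> bool" where
  "cycle_indep Ed ends F \<longleftrightarrow> F \<subseteq> Ed \<and> (\<forall>e \<in> F. ends e \<notin> (adj ends (F - {e}))\<^sup>*)"

text \<open>Wheel W_k: hub vertex None, rim vertices Some i (i < k).
  Edge (False, i) is the rim edge joining Some i and Some ((i+1) mod k);
  edge (True, i) is the spoke joining the hub and Some i.\<close>
definition wheel_rim :: "nat \<Rightarrow> (bool \<times> nat) set" where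
  "wheel_rim k = {(False, i) | i. i < k}"

definition wheel_spokes :: "nat \<Rightarrow> (bool \<times> nat) set" where
  "wheel_spokes k = {(True, i) | i. i < k}"

definition wheel_edges :: "nat \<Rightarrow> (bool \<times> nat) set" where
  "wheel_edges k = wheel_rim k \<union> wheel_spokes k"

definition wheel_ends :: "nat \<Rightarrow> bool \<times> nat \<Rightarrow> nat option \<times> nat option" where
  "wheel_ends k e = (if fst e then (None, Some (snd e))
                     else (Some (snd e), Some ((snd e + 1) mod k)))"

definition wheel_indep :: "nat \<Rightarrow> (bool \<times> nat) set \<Rightarrow> bool" where
  "wheel_indep k = cycle_indep (wheel_edges k) (wheel_ends k)"

definition whirl_indep :: "nat \<Rightarrow> (bool \<times> nat) set \<Rightarrow> bool" where
  "whirl_indep k = relax (wheel_edges k) (wheel_indep k) (wheel_rim k)"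

end

theory Submission
  imports Defs
begin

definition isys :: "'a set \<Rightarrow> ('a set \<Rightarrow> bool) \<Rightarrow> bool" where
  "isys E indep \<longleftrightarrow> finite E \<and> (\<forall>J. indep J \<longrightarrow> J \<subseteq> E) \<and> indep {}"

lemma isys_rank_fin:
  assumes "isys E indep"
  shows "finite {card J | J. J \<subseteq> Y \<and> indep J}" "{card J | J. J \<subseteq> Y \<and> indep J} \<noteq> {}"
proof -
  have "{card J | J. J \<subseteq> Y \<and> indep J} \<subseteq> {..card E}"
    using assms unfolding isys_def by (auto intro!: card_mono)
  then show "finite {card J | J. J \<subseteq> Y \<and> indep J}" using finite_subset by blast
  show "{card J | J. J \<subseteq> Y \<and> indep J} \<noteq> {}" using assms unfolding isys_def by auto
qed

lemma rank_ge:
  assumes "isys E indep" "J \<subseteq> Y" "indep J"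
  shows "card J \<le> rank indep Y"
  unfolding rank_def by (rule Max_ge[OF isys_rank_fin(1)[OF assms(1)]]) (use assms in auto)

lemma rank_attained:
  assumes "isys E indep"
  obtains J where "J \<subseteq> Y" "indep J" "card J = rank indep Y"
proof -
  have "rank indep Y \<in> {card J | J. J \<subseteq> Y \<and> indep J}"
    unfolding rank_def using isys_rank_fin[OF assms(1)] by (intro Max_in) auto
  then show ?thesis using that by auto
qed

lemma rank_mono:
  assumes "isys E indep" "Y \<subseteq> Z"
  shows "rank indep Y \<le> rank indep Z"
proof -
  obtain J where "J \<subseteq> Y" "indep J" "card J = rank indep Y" using rank_attained[OF assms(1)] by blast
  then show ?thesis using rank_ge[OF assms(1), of J Z] assms(2) by auto
qed

lemma rank_subadd:
  assumes "isys E indep" "\<And>J K. indep J \<Longrightarrow> K \<subseteq> J \<Longrightarrow> indep K" "finite Y"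
  shows "rank indep (Y \<union> C) \<le> card Y + rank indep C"
proof -
  obtain J where J: "J \<subseteq> Y \<union> C" "indep J" "card J = rank indep (Y \<union> C)"
    using rank_attained[OF assms(1)] by blast
  have "J \<subseteq> (J \<inter> Y) \<union> (J \<inter> C)" using J by auto
  moreover have "finite J" using J assms(1) unfolding isys_def by (meson finite_subset)
  ultimately have "card J \<le> card (J \<inter> Y) + card (J \<inter> C)"
    by (metis card_Un_le card_mono finite_Un finite_Int order_trans)
  moreover have "card (J \<inter> Y) \<le> card Y" using assms(3) by (simp add: card_mono)
  moreover have "card (J \<inter> C) \<le> rank indep C"
    using rank_ge[OF assms(1), of "J \<inter> C" C] assms(2)[OF J(2)] by auto
  ultimately show ?thesis using J by linarith
qed

definition maxind :: "('a set \<Rightarrow> bool) \<Rightarrow> 'a set \<Rightarrow> 'a set \<Rightarrow> bool" where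
  "maxind indep Z K \<longleftrightarrow> K \<subseteq> Z \<and> indep K \<and> (\<forall>K'. K \<subset> K' \<and> K' \<subseteq> Z \<longrightarrow> \<not> indep K')"

lemma exists_maxind:
  assumes "finite Z" "indep P" "P \<subseteq> Z"
  shows "\<exists>K. P \<subseteq> K \<and> maxind indep Z K"
proof -
  let ?S = "{K. P \<subseteq> K \<and> K \<subseteq> Z \<and> indep K}"
  have "?S \<subseteq> Pow Z" by auto
  then have "finite ?S" using assms(1) finite_subset by blast
  then have fin: "finite (card ` ?S)" by blast
  have ne: "card ` ?S \<noteq> {}" using assms by auto
  obtain K where K: "K \<in> ?S" "card K = Max (card ` ?S)"
    using Max_in[OF fin ne] by auto
  have "maxind indep Z K"
    unfolding maxind_def
  proof (intro conjI allI impI)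
    fix K' assume "K \<subset> K' \<and> K' \<subseteq> Z"
    moreover have "finite K'" using calculation assms(1) finite_subset by blast
    ultimately have "card K < card K'" by (meson psubset_card_mono)
    show "\<not> indep K'"
    proof
      assume "indep K'"
      then have "K' \<in> ?S" using \<open>K \<subset> K' \<and> K' \<subseteq> Z\<close> K(1) by auto
      then have "card K' \<le> card K" using K(2) fin by simp
      then show False using \<open>card K < card K'\<close> by simp
    qed
  qed (use K in auto)
  then show ?thesis using K by auto
qed

lemma matroid_isys: "matroid E indep \<Longrightarrow> isys E indep"
  unfolding matroid_def isys_def by auto

lemma maxind_card:
  assumes "matroid E indep" "maxind indep Z K"
  shows "card K = rank indep Z"
proof -
  have iss: "isys E indep" using matroid_isys assms(1) by blast
  have "card J \<le> card K" if JJ: "J \<subseteq> Z" "indep J" for J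
  proof (rule ccontr)
    assume "\<not> card J \<le> card K"
    then have "card K < card J" by simp
    have aug: "\<And>Y Z. indep Y \<Longrightarrow> indep Z \<Longrightarrow> card Y < card Z \<Longrightarrow> \<exists>e\<in>Z-Y. indep (insert e Y)"
      using assms(1) unfolding matroid_def by blast
    have "indep K" using assms(2) unfolding maxind_def by blast
    then obtain e where "e \<in> J - K" "indep (insert e K)"
      using aug[of K J] JJ \<open>card K < card J\<close> by blast
    then show False using assms(2) JJ unfolding maxind_def by blast
  qed
  moreover obtain J where "J \<subseteq> Z" "indep J" "card J = rank indep Z" using rank_attained[OF iss] by blast
  moreover have "card K \<le> rank indep Z" using rank_ge[OF iss] assms(2) unfolding maxind_def by blast
  ultimately show ?thesis by (metis le_antisym)
qed

lemma base_ext: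
  assumes "matroid E indep" "indep J"
  shows "\<exists>B \<in> bases E indep. J \<subseteq> B"
proof -
  have "finite E" "J \<subseteq> E" using assms unfolding matroid_def by auto
  then obtain K where "J \<subseteq> K" "maxind indep E K" using exists_maxind assms(2) by metis
  then show ?thesis unfolding maxind_def bases_def by auto
qed

locale relaxsetup =
  fixes E :: "'a set" and N :: "'a set \<Rightarrow> bool" and X :: "'a set"
  assumes mat: "matroid E N" and ch: "circuit_hyperplane E N X"
begin

abbreviation "M \<equiv> relax E N X"

lemma X_sub: "X \<subseteq> E" and X_dep: "\<not> N X" and X_min: "\<And>D. D \<subset> X \<Longrightarrow> N D"
  and X_flat: "\<And>e. e \<in> E - X \<Longrightarrow> rank N (insert e X) > rank N X"
  and X_hyp: "rank N X + 1 = rank N E"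
  using ch unfolding circuit_hyperplane_def circuit_def hyperplane_def flat_def by auto

lemma finE: "finite E" using mat unfolding matroid_def by auto
lemma finX: "finite X" using X_sub finE finite_subset by blast

lemma N_sub: "N J \<Longrightarrow> J \<subseteq> E" using mat unfolding matroid_def by auto
lemma N_down: "N J \<Longrightarrow> K \<subseteq> J \<Longrightarrow> N K" using mat unfolding matroid_def by blast
lemma N_empty: "N {}" using mat unfolding matroid_def by auto

lemma isysN: "isys E N" using mat matroid_isys by blast

lemma M_sub: "M J \<Longrightarrow> J \<subseteq> E"
  using X_sub unfolding relax_def bases_def by auto

lemma isysM: "isys E M"
  unfolding isys_def using finE M_sub unfolding relax_def by auto

lemma M_down: "M J \<Longrightarrow> K \<subseteq> J \<Longrightarrow> M K"
  unfolding relax_def by blast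

lemma N_M: "N J \<Longrightarrow> M J"
  using base_ext[OF mat] unfolding relax_def by blast

lemma M_N: "M J \<Longrightarrow> N J \<or> J = X"
proof -
  assume "M J"
  then obtain B where B: "B \<in> insert X (bases E N)" "J \<subseteq> B" unfolding relax_def by blast
  show "N J \<or> J = X"
  proof (cases "B = X")
    case True
    then show ?thesis using B X_min by blast
  next
    case False
    then have "N B" using B unfolding bases_def by auto
    then show ?thesis using N_down B by blast
  qed
qed

lemma M_X: "M X" unfolding relax_def by auto

lemma X_ne: "X \<noteq> {}" using X_dep N_empty by auto

lemma rankN_X_ge: "rank N X + 1 \<ge> card X"
proof -
  obtain x where "x \<in> X" using X_ne by blast
  then have "N (X - {x})" using X_min by blast
  then have "card (X - {x}) \<le> rank N X" using rank_ge[OF isysN] by blast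
  then show ?thesis using \<open>x \<in> X\<close> finX by simp
qed

lemma rankN_X_lt: "rank N X < card X"
proof -
  obtain J where J: "J \<subseteq> X" "N J" "card J = rank N X" using rank_attained[OF isysN] by blast
  then have "J \<noteq> X" using X_dep by blast
  then have "J \<subset> X" using J by blast
  then show ?thesis using J finX psubset_card_mono by metis
qed

lemma rankN_le: "rank N Y \<le> card X"
proof -
  have "rank N Y \<le> rank N (Y \<inter> E)"
  proof -
    obtain J where J: "J \<subseteq> Y" "N J" "card J = rank N Y" using rank_attained[OF isysN] by blast
    then have "J \<subseteq> Y \<inter> E" using N_sub by blast
    then show ?thesis using rank_ge[OF isysN] J by metis
  qed
  also have "\<dots> \<le> rank N E" using rank_mono[OF isysN] by blast
  finally show ?thesis using X_hyp rankN_X_lt by linarith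
qed

lemma rankM_le: "rank M Y \<le> card X"
proof -
  obtain J where J: "J \<subseteq> Y" "M J" "card J = rank M Y" using rank_attained[OF isysM] by blast
  from M_N[OF J(2)] show ?thesis
  proof
    assume "N J"
    then have "card J \<le> rank N J" using rank_ge[OF isysN] by blast
    then show ?thesis using rankN_le[of J] J by linarith
  qed (use J in simp)
qed

lemma rankM_X: "rank M X \<ge> card X"
  using rank_ge[OF isysM _ M_X] by blast

lemma rankNM: "rank N Y \<le> rank M Y"
proof -
  obtain J where J: "J \<subseteq> Y" "N J" "card J = rank N Y" using rank_attained[OF isysN] by blast
  then show ?thesis using rank_ge[OF isysM, of J Y] N_M by metis
qed

lemma rankMN:
  assumes "Y \<subseteq> E" "Y \<noteq> X"
  shows "rank M Y = rank N Y"
proof -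
  obtain J where J: "J \<subseteq> Y" "M J" "card J = rank M Y" using rank_attained[OF isysM] by blast
  have "rank M Y \<le> rank N Y"
  proof (cases "N J")
    case True
    then show ?thesis using J rank_ge[OF isysN] by metis
  next
    case False
    then have "J = X" using M_N J by blast
    then obtain e where e: "e \<in> Y - X" using J assms by blast
    then have "e \<in> E - X" using assms by blast
    then have "rank N (insert e X) \<ge> card X" using X_flat rankN_X_ge by fastforce
    moreover have "insert e X \<subseteq> Y" using e J \<open>J = X\<close> by blast
    then have "rank N (insert e X) \<le> rank N Y" using rank_mono[OF isysN] by blast
    moreover have "card J = card X" using \<open>J = X\<close> by simp
    ultimately show ?thesis using J(3) by linarith
  qed
  then show ?thesis using rankNM[of Y] by linarith
qed

end

lemma bit_self_add: "(x::bit) + x = 0"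
  by (cases x) (simp_all del: add_bit_eq_xor)

lemma bit_eq_of_add0: "(x::bit) + y = 0 \<Longrightarrow> x = y"
  by (cases x; cases y) (simp_all del: add_bit_eq_xor)

lemma sum_symdiff:
  fixes f :: "'a \<Rightarrow> bit"
  assumes "finite A" "finite B"
  shows "sum f A + sum f B = sum f ((A - B) \<union> (B - A))"
proof -
  have a: "sum f A = sum f (A - B) + sum f (A \<inter> B)"
  proof -
    have "A = (A - B) \<union> (A \<inter> B)" by blast
    then have "sum f A = sum f ((A - B) \<union> (A \<inter> B))" by simp
    also have "\<dots> = sum f (A - B) + sum f (A \<inter> B)" using assms by (intro sum.union_disjoint) auto
    finally show ?thesis .
  qed
  have b: "sum f B = sum f (B - A) + sum f (A \<inter> B)"
  proof -
    have "B = (B - A) \<union> (A \<inter> B)" by blast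
    then have "sum f B = sum f ((B - A) \<union> (A \<inter> B))" by simp
    also have "\<dots> = sum f (B - A) + sum f (A \<inter> B)" using assms by (intro sum.union_disjoint) auto
    finally show ?thesis .
  qed
  have c: "sum f ((A - B) \<union> (B - A)) = sum f (A - B) + sum f (B - A)"
    using assms by (intro sum.union_disjoint) auto
  have "sum f A + sum f B = sum f (A - B) + sum f (B - A) + (sum f (A \<inter> B) + sum f (A \<inter> B))"
    unfolding a b by (simp only: ac_simps)
  also have "\<dots> = sum f (A - B) + sum f (B - A)" by (simp only: bit_self_add add_0_right)
  finally show ?thesis using c by simp
qed

lemma span_closed:
  fixes v :: "'a \<Rightarrow> nat \<Rightarrow> bit"
  assumes "finite I" "finite B"
    and "\<And>i. i \<in> I \<Longrightarrow> \<exists>A \<subseteq> B. \<forall>c. f i c = (\<Sum>x\<in>A. v x c)"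
  shows "\<exists>A \<subseteq> B. \<forall>c. (\<Sum>i\<in>I. f i c) = (\<Sum>x\<in>A. v x c)"
  using assms(1,3)
proof (induction I rule: finite_induct)
  case empty
  then show ?case by (intro exI[of _ "{}"]) auto
next
  case (insert i I)
  obtain A1 where A1: "A1 \<subseteq> B" "\<forall>c. f i c = (\<Sum>x\<in>A1. v x c)" using insert.prems by blast
  obtain A2 where A2: "A2 \<subseteq> B" "\<forall>c. (\<Sum>i\<in>I. f i c) = (\<Sum>x\<in>A2. v x c)" using insert by blast
  have fA: "finite A1" "finite A2" using A1(1) A2(1) assms(2) by (simp_all add: finite_subset)
  show ?case
  proof (intro exI[of _ "(A1 - A2) \<union> (A2 - A1)"] conjI allI)
    show "(A1 - A2) \<union> (A2 - A1) \<subseteq> B" using A1 A2 by blast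
    fix c
    have "(\<Sum>i\<in>insert i I. f i c) = f i c + (\<Sum>i\<in>I. f i c)" using insert by simp
    also have "\<dots> = (\<Sum>x\<in>A1. v x c) + (\<Sum>x\<in>A2. v x c)" using A1 A2 by simp
    also have "\<dots> = (\<Sum>x\<in>(A1 - A2) \<union> (A2 - A1). v x c)" using sum_symdiff fA by blast
    finally show "(\<Sum>i\<in>insert i I. f i c) = (\<Sum>x\<in>(A1 - A2) \<union> (A2 - A1). v x c)" .
  qed
qed

lemma mat_sub: "matroid E I \<Longrightarrow> I J \<Longrightarrow> J \<subseteq> E" unfolding matroid_def by blast
lemma mat_down: "matroid E I \<Longrightarrow> I J \<Longrightarrow> K \<subseteq> J \<Longrightarrow> I K" unfolding matroid_def by blast
lemma mat_fin: "matroid E I \<Longrightarrow> finite E" unfolding matroid_def by blast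

lemma K1:
  assumes mat: "matroid E N" and B: "maxind N C B" and CE: "C \<subseteq> E"
    and YE: "Y \<subseteq> E" and disj: "Y \<inter> C = {}"
    and r: "rank N (Y \<union> C) = card Y + rank N C"
  shows "N (Y \<union> B)"
proof -
  have finE: "finite E" using mat_fin[OF mat] .
  have finY: "finite Y" using YE finE finite_subset by blast
  have BC: "B \<subseteq> C" "N B" using B unfolding maxind_def by auto
  have cB: "card B = rank N C" using maxind_card[OF mat B] .
  have finYC: "finite (Y \<union> C)" using finE YE CE finite_subset by (simp add: finite_subset)
  have "B \<subseteq> Y \<union> C" using BC by blast
  then obtain K where K: "B \<subseteq> K" "maxind N (Y \<union> C) K"
    using exists_maxind[of "Y \<union> C" N B] finYC BC(2) by blast
  have cK: "card K = rank N (Y \<union> C)" using maxind_card[OF mat K(2)] .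
  have KN: "N K" "K \<subseteq> Y \<union> C" using K(2) unfolding maxind_def by auto
  have "N (K \<inter> C)" using mat_down[OF mat KN(1)] by blast
  moreover have "B \<subseteq> K \<inter> C" using K(1) BC by blast
  ultimately have "K \<inter> C = B"
  proof -
    assume a1: "N (K \<inter> C)" and a2: "B \<subseteq> K \<inter> C"
    have mx: "\<forall>K'. B \<subset> K' \<and> K' \<subseteq> C \<longrightarrow> \<not> N K'" using B unfolding maxind_def by (elim conjE)
    show ?thesis
    proof (rule ccontr)
      assume "K \<inter> C \<noteq> B"
      then have "B \<subset> K \<inter> C" using a2 by (auto simp: psubset_eq)
      then show False using mx a1 by blast
    qed
  qed
  then have KYB: "K \<subseteq> Y \<union> B" using KN by blast
  have "B \<subseteq> E" using BC CE by blast
  then have finB: "finite B" using finE by (rule finite_subset)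
  have "card (Y \<union> B) = card Y + card B" using finY finB disj BC by (intro card_Un_disjoint) auto
  then have "card K = card (Y \<union> B)" using cK cB r by simp
  moreover have "finite (Y \<union> B)" using finY finB by simp
  ultimately have "K = Y \<union> B" using KYB card_subset_eq by metis
  then show ?thesis using KN by simp
qed

lemma K2:
  assumes mat: "matroid E N" and B: "maxind N C B"
    and finY: "finite Y" and disj: "Y \<inter> C = {}" and ind: "N (Y \<union> B)"
  shows "rank N (Y \<union> C) \<ge> card Y + rank N C"
proof -
  have BC: "B \<subseteq> C" using B unfolding maxind_def by auto
  have cB: "card B = rank N C" using maxind_card[OF mat B] .
  have "Y \<union> B \<subseteq> E" using mat_sub[OF mat ind] .
  then have "B \<subseteq> E" by blast
  then have finB: "finite B" using mat_fin[OF mat] by (simp add: finite_subset)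
  have "card (Y \<union> B) = card Y + card B" using finY finB disj BC by (intro card_Un_disjoint) auto
  moreover have "card (Y \<union> B) \<le> rank N (Y \<union> C)"
    using rank_ge[OF matroid_isys[OF mat] _ ind] BC by blast
  ultimately show ?thesis using cB by simp
qed

lemma rtrancl_pair:
  assumes "(p, q) \<in> {(x, y), (y, x)}\<^sup>*"
  shows "p = q \<or> (p, q) = (x, y) \<or> (p, q) = (y, x)"
  using assms
proof (induction q rule: rtrancl_induct)
  case base
  then show ?case by simp
next
  case (step b c)
  then show ?case by auto
qed

lemma adj_single: "adj ends {b} = {(fst (ends b), snd (ends b)), (snd (ends b), fst (ends b))}"
  unfolding adj_def by (cases "ends b") auto

lemma pair_cycle_indep:
  assumes "a \<in> Ed" "b \<in> Ed" "a \<noteq> b"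
    and "fst (ends a) \<noteq> snd (ends a)" "fst (ends b) \<noteq> snd (ends b)"
    and "ends a \<noteq> ends b" "ends a \<noteq> prod.swap (ends b)"
  shows "cycle_indep Ed ends {a, b}"
  unfolding cycle_indep_def
proof (intro conjI ballI)
  show "{a, b} \<subseteq> Ed" using assms by auto
  fix e assume e: "e \<in> {a, b}"
  show "ends e \<notin> (adj ends ({a, b} - {e}))\<^sup>*"
  proof
    assume h: "ends e \<in> (adj ends ({a, b} - {e}))\<^sup>*"
    show False
    proof (cases "e = a")
      case True
      then have "{a, b} - {e} = {b}" using assms by auto
      then have "(fst (ends a), snd (ends a)) \<in> {(fst (ends b), snd (ends b)), (snd (ends b), fst (ends b))}\<^sup>*"
        using h True adj_single[of ends b] by simp
      from rtrancl_pair[OF this] show False using assms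
        by (cases "ends a"; cases "ends b") auto
    next
      case False
      then have "e = b" using e by blast
      then have "{a, b} - {e} = {a}" using assms by auto
      then have "(fst (ends b), snd (ends b)) \<in> {(fst (ends a), snd (ends a)), (snd (ends a), fst (ends a))}\<^sup>*"
        using h \<open>e = b\<close> adj_single[of ends a] by simp
      from rtrancl_pair[OF this] show False using assms
        by (cases "ends a"; cases "ends b") auto
    qed
  qed
qed

lemma base_ext_gen:
  assumes "finite E" "indep J" "J \<subseteq> E"
  shows "\<exists>B \<in> bases E indep. J \<subseteq> B"
proof -
  obtain K where "J \<subseteq> K" "maxind indep E K" using exists_maxind[of E indep J] assms by blast
  then show ?thesis unfolding maxind_def bases_def by auto
qed

lemma fin_wheel: "finite (wheel_edges k)"
proof -
  have "wheel_edges k \<subseteq> UNIV \<times> {..<k}" unfolding wheel_edges_def wheel_rim_def wheel_spokes_def by auto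
  then show ?thesis by (rule finite_subset) simp
qed

lemma whirl_from_wheel:
  assumes "wheel_indep k J"
  shows "whirl_indep k J"
proof -
  have "J \<subseteq> wheel_edges k" using assms unfolding wheel_indep_def cycle_indep_def by blast
  then show ?thesis using base_ext_gen[of "wheel_edges k" "wheel_indep k" J] fin_wheel[of k] assms unfolding whirl_indep_def relax_def by blast
qed

lemma whirl_rim: "whirl_indep k (wheel_rim k)"
  unfolding whirl_indep_def relax_def by blast

context
  fixes k i :: nat
  assumes k3: "k \<ge> 3" and ik: "i < k"
begin

definition "jj = (i + 1) mod k"

lemma jj_lt: "jj < k" unfolding jj_def using ik by simp
lemma jj_ne: "jj \<noteq> i"
proof (cases "i + 1 < k")
  case True
  then show ?thesis unfolding jj_def by simp
next
  case False
  then have "i + 1 = k" using ik by simp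
  then show ?thesis unfolding jj_def using k3 by simp
qed

lemma mem_edges: "(True, i) \<in> wheel_edges k" "(False, i) \<in> wheel_edges k" "(True, jj) \<in> wheel_edges k"
  unfolding wheel_edges_def wheel_rim_def wheel_spokes_def using ik jj_lt by auto

lemma ends3: "wheel_ends k (True, i) = (None, Some i)" "wheel_ends k (False, i) = (Some i, Some jj)"
  "wheel_ends k (True, jj) = (None, Some jj)"
  unfolding wheel_ends_def jj_def by auto

lemma tri_dep: "\<not> whirl_indep k {(True, i), (False, i), (True, jj)}"
proof
  assume "whirl_indep k {(True, i), (False, i), (True, jj)}"
  then obtain B where B: "B \<in> insert (wheel_rim k) (bases (wheel_edges k) (wheel_indep k))"
    "{(True, i), (False, i), (True, jj)} \<subseteq> B"
    unfolding whirl_indep_def relax_def by blast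
  have "(True, i) \<notin> wheel_rim k" unfolding wheel_rim_def by auto
  then have "B \<noteq> wheel_rim k" using B by blast
  then have "wheel_indep k B" using B unfolding bases_def by auto
  then have ci: "wheel_ends k (False, i) \<notin> (adj (wheel_ends k) (B - {(False, i)}))\<^sup>*"
    using B unfolding wheel_indep_def cycle_indep_def by blast
  have "(Some i, None) \<in> adj (wheel_ends k) (B - {(False, i)})"
    unfolding adj_def using B ends3 by force
  moreover have "(None, Some jj) \<in> adj (wheel_ends k) (B - {(False, i)})"
    unfolding adj_def using B ends3 by force
  ultimately have "(Some i, Some jj) \<in> (adj (wheel_ends k) (B - {(False, i)}))\<^sup>*" by auto
  then show False using ci ends3 by simp
qed

lemma pair1: "whirl_indep k {(True, i), (False, i)}"
  by (rule whirl_from_wheel, unfold wheel_indep_def, rule pair_cycle_indep)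
     (use mem_edges ends3 jj_ne in auto)
lemma pair2: "whirl_indep k {(True, i), (True, jj)}"
  by (rule whirl_from_wheel, unfold wheel_indep_def, rule pair_cycle_indep)
     (use mem_edges ends3 jj_ne in auto)
lemma pair3: "whirl_indep k {(False, i), (True, jj)}"
  by (rule whirl_from_wheel, unfold wheel_indep_def, rule pair_cycle_indep)
     (use mem_edges ends3 jj_ne in auto)

end

lemma shift_sum:
  fixes a :: "nat \<Rightarrow> 'b::comm_monoid_add"
  assumes "k > 0"
  shows "(\<Sum>i<k. a ((i + 1) mod k)) = (\<Sum>i<k. a i)"
proof -
  obtain m where m: "k = Suc m" using assms by (cases k) auto
  have "(\<Sum>i<Suc m. a ((i + 1) mod Suc m)) = (\<Sum>i<m. a ((i + 1) mod Suc m)) + a ((m + 1) mod Suc m)"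
    by simp
  also have "(\<Sum>i<m. a ((i + 1) mod Suc m)) = (\<Sum>i<m. a (Suc i))"
    by (intro sum.cong) auto
  also have "a ((m + 1) mod Suc m) = a 0" by simp
  also have "(\<Sum>i<m. a (Suc i)) + a 0 = (\<Sum>i<Suc m. a i)"
    unfolding sum.lessThan_Suc_shift by (rule add.commute)
  finally show ?thesis using m by simp
qed

lemma rim_img: "wheel_rim k = (\<lambda>i. (False, i)) ` {..<k}"
  unfolding wheel_rim_def by auto

lemma card_rim: "card (wheel_rim k) = k"
  unfolding rim_img by (subst card_image) (auto simp: inj_on_def)

lemma tri_sum:
  fixes g :: "'a \<Rightarrow> bit"
  assumes k3: "k \<ge> 3" and inj: "inj_on \<phi> (wheel_edges k)"
  shows "(\<Sum>x\<in>\<phi> ` wheel_rim k. g x) = (\<Sum>i<k. \<Sum>x\<in>\<phi> ` {(True, i), (False, i), (True, jj k i)}. g x)"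
proof -
  have rimE: "wheel_rim k \<subseteq> wheel_edges k" unfolding wheel_edges_def by auto
  have "(\<Sum>x\<in>\<phi> ` wheel_rim k. g x) = (\<Sum>e\<in>wheel_rim k. g (\<phi> e))"
    using inj rimE by (subst sum.reindex) (auto intro: inj_on_subset)
  also have "\<dots> = (\<Sum>i<k. g (\<phi> (False, i)))"
    unfolding rim_img by (subst sum.reindex) (auto simp: inj_on_def)
  finally have L: "(\<Sum>x\<in>\<phi> ` wheel_rim k. g x) = (\<Sum>i<k. g (\<phi> (False, i)))" .
  have T: "(\<Sum>x\<in>\<phi> ` {(True, i), (False, i), (True, jj k i)}. g x)
      = g (\<phi> (True, i)) + g (\<phi> (False, i)) + g (\<phi> (True, jj k i))" if ik: "i < k" for i
  proof -
    have sub: "{(True, i), (False, i), (True, jj k i)} \<subseteq> wheel_edges k" using mem_edges[OF k3 ik] by auto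
    have "(\<Sum>x\<in>\<phi> ` {(True, i), (False, i), (True, jj k i)}. g x) = (\<Sum>e\<in>{(True, i), (False, i), (True, jj k i)}. g (\<phi> e))"
      by (subst sum.reindex[OF inj_on_subset[OF inj sub]]) simp
    also have "\<dots> = g (\<phi> (True, i)) + g (\<phi> (False, i)) + g (\<phi> (True, jj k i))"
      using jj_ne[OF k3 ik] by (simp add: add.assoc del: add_bit_eq_xor)
    finally show ?thesis .
  qed
  have "(\<Sum>i<k. \<Sum>x\<in>\<phi> ` {(True, i), (False, i), (True, jj k i)}. g x)
      = (\<Sum>i<k. g (\<phi> (True, i)) + g (\<phi> (False, i)) + g (\<phi> (True, jj k i)))"
    using T by (intro sum.cong) auto
  also have "\<dots> = (\<Sum>i<k. g (\<phi> (False, i))) + ((\<Sum>i<k. g (\<phi> (True, i))) + (\<Sum>i<k. g (\<phi> (True, jj k i))))"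
    by (simp only: sum.distrib ac_simps)
  also have "(\<Sum>i<k. g (\<phi> (True, jj k i))) = (\<Sum>i<k. g (\<phi> (True, i)))"
  proof -
    have "jj k i = (i + 1) mod k" if "i < k" for i using jj_def[OF k3 that] .
    then have "(\<Sum>i<k. g (\<phi> (True, jj k i))) = (\<Sum>i<k. g (\<phi> (True, (i + 1) mod k)))"
      by (intro sum.cong) auto
    then show ?thesis using shift_sum[of k "\<lambda>i. g (\<phi> (True, i))"] k3 by simp
  qed
  also have "(\<Sum>i<k. g (\<phi> (True, i))) + (\<Sum>i<k. g (\<phi> (True, i))) = 0" by (rule bit_self_add)
  finally show ?thesis using L by simp
qed

theorem lemma3p4:
  fixes E :: "'a set" and indepN :: "'a set \<Rightarrow> bool" and X :: "'a set" and k :: nat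
    and E1 :: "'a set" and indep1 :: "'a set \<Rightarrow> bool"
  assumes "binary E indepN"
    and "circuit_hyperplane E indepN X"
    and "k \<ge> 3"
    and "\<exists>E' indep' (f :: bool \<times> nat \<Rightarrow> 'a).
           minor E (relax E indepN X) E' indep' \<and>
           iso_map f (wheel_edges k) (whirl_indep k) E' indep'"
    and "minor E (relax E indepN X) E1 indep1"
    and "iso_map \<phi> (wheel_edges k) (whirl_indep k) E1 indep1"
  shows "\<phi> ` wheel_rim k \<subseteq> X \<and> \<phi> ` wheel_spokes k \<inter> X = {}"
proof -
  have mat: "matroid E indepN" using assms(1) unfolding binary_def by blast
  obtain v :: "'a \<Rightarrow> nat \<Rightarrow> bit" where v: "\<And>Y. Y \<subseteq> E \<Longrightarrow>
        indepN Y \<longleftrightarrow> (\<forall>S \<subseteq> Y. S \<noteq> {} \<longrightarrow> (\<lambda>i. \<Sum>x\<in>S. v x i) \<noteq> (\<lambda>i. 0))"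
    using assms(1) unfolding binary_def by blast
  interpret rs: relaxsetup E indepN X using mat assms(2) by unfold_locales
  let ?M = "relax E indepN X"
  have k3: "k \<ge> 3" by fact
  obtain C D where CD: "C \<subseteq> E" "D \<subseteq> E" "C \<inter> D = {}" "E1 = E - C - D"
    and ind1: "\<And>Y. indep1 Y \<longleftrightarrow> Y \<subseteq> E1 \<and> rank ?M (Y \<union> C) = card Y + rank ?M C"
    using assms(5) unfolding minor_def by blast
  have bij: "bij_betw \<phi> (wheel_edges k) E1"
    and iso: "\<And>Y. Y \<subseteq> wheel_edges k \<Longrightarrow> whirl_indep k Y \<longleftrightarrow> indep1 (\<phi> ` Y)"
    using assms(6) unfolding iso_map_def by auto
  have inj: "inj_on \<phi> (wheel_edges k)" and img: "\<phi> ` wheel_edges k = E1"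
    using bij unfolding bij_betw_def by auto
  have E1E: "E1 \<subseteq> E" "E1 \<inter> C = {}" using CD by auto
  have rimE: "wheel_rim k \<subseteq> wheel_edges k" and spE: "wheel_spokes k \<subseteq> wheel_edges k"
    unfolding wheel_edges_def by auto
  define R where "R = \<phi> ` wheel_rim k"
  have RE1: "R \<subseteq> E1" unfolding R_def using rimE img by blast
  have cR: "card R = k" unfolding R_def using card_rim[of k] inj rimE
    by (metis card_image inj_on_subset)
  have "indep1 R" unfolding R_def using iso[OF rimE] whirl_rim by blast
  then have rR: "rank ?M (R \<union> C) = k + rank ?M C" using ind1 cR by simp
  have rMC: "rank ?M C + k \<le> card X" using rs.rankM_le[of "R \<union> C"] rR by simp
  have main: "R \<union> C = X"
  proof (rule ccontr)
    assume RCX: "R \<union> C \<noteq> X"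
    have "C \<noteq> X" using rMC rs.rankM_X k3 by auto
    then have rCN: "rank ?M C = rank indepN C" using rs.rankMN CD(1) by blast
    have finC: "finite C" using CD(1) rs.finE by (simp add: finite_subset)
    obtain B where B: "maxind indepN C B"
      using exists_maxind[of C indepN "{}"] rs.N_empty finC by blast
    have BC: "B \<subseteq> C" using B unfolding maxind_def by blast
    have finB: "finite B" using BC CD(1) rs.finE by (simp add: finite_subset)
    have G1: "indepN (Y \<union> B)" if "indep1 Y" "Y \<union> C \<noteq> X" for Y
    proof -
      have YE1: "Y \<subseteq> E1" "rank ?M (Y \<union> C) = card Y + rank ?M C" using that ind1 by auto
      have "Y \<union> C \<subseteq> E" using YE1 E1E CD by blast
      then have "rank ?M (Y \<union> C) = rank indepN (Y \<union> C)" using rs.rankMN that(2) by blast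
      then have "rank indepN (Y \<union> C) = card Y + rank indepN C" using YE1 rCN by simp
      then show ?thesis using K1[OF mat B CD(1)] YE1 E1E by blast
    qed
    have G2: "\<not> indepN (Y \<union> B)" if "Y \<subseteq> E1" "\<not> indep1 Y" for Y
    proof
      assume h: "indepN (Y \<union> B)"
      have finY: "finite Y" using that(1) E1E rs.finE by (simp add: finite_subset)
      have "Y \<inter> C = {}" using that(1) E1E by blast
      then have "rank indepN (Y \<union> C) \<ge> card Y + rank indepN C" using K2[OF mat B finY _ h] by blast
      moreover have "rank indepN (Y \<union> C) \<le> rank ?M (Y \<union> C)" by (rule rs.rankNM)
      moreover have "rank ?M (Y \<union> C) \<le> card Y + rank ?M C"
        by (rule rank_subadd[OF rs.isysM rs.M_down finY])
      ultimately have "rank ?M (Y \<union> C) = card Y + rank ?M C" using rCN by linarith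
      then show False using that ind1 by blast
    qed
    have G3: "Y \<union> C \<noteq> X" if "indep1 Y" "card Y < k" for Y
    proof -
      have "rank ?M (Y \<union> C) = card Y + rank ?M C" using that ind1 by blast
      then have "rank ?M (Y \<union> C) < card X" using rMC that(2) by linarith
      then show ?thesis using rs.rankM_X by auto
    qed
    have tri: "\<exists>A \<subseteq> B. \<forall>c. (\<Sum>x\<in>\<phi> ` {(True, i), (False, i), (True, jj k i)}. v x c) = (\<Sum>x\<in>A. v x c)"
      if ik: "i < k" for i
    proof -
      let ?a = "\<phi> (True, i)" and ?b = "\<phi> (False, i)" and ?c = "\<phi> (True, jj k i)"
      have sub: "{(True, i), (False, i), (True, jj k i)} \<subseteq> wheel_edges k" using mem_edges[OF k3 ik] by auto
      have TE1: "\<phi> ` {(True, i), (False, i), (True, jj k i)} \<subseteq> E1" using sub img by blast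
      have Teq: "\<phi> ` {(True, i), (False, i), (True, jj k i)} = {?a, ?b, ?c}" by simp
      have nT: "\<not> indepN ({?a, ?b, ?c} \<union> B)"
        using G2[OF TE1] iso[OF sub] tri_dep[OF k3 ik] Teq by simp
      have pairind: "indepN (\<phi> ` P \<union> B)" if P: "P \<subseteq> wheel_edges k" "whirl_indep k P" "card P \<le> 2" for P
      proof -
        have "indep1 (\<phi> ` P)" using iso P by blast
        moreover have "finite P" using P(1) fin_wheel[of k] by (simp add: finite_subset)
        then have "card (\<phi> ` P) \<le> card P" by (rule card_image_le)
        then have "card (\<phi> ` P) < k" using P(3) k3 by linarith
        ultimately show ?thesis using G1 G3 by blast
      qed
      have p1: "indepN ({?a, ?b} \<union> B)" using pairind[of "{(True, i), (False, i)}"] pair1[OF k3 ik] sub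
        by (simp add: card_insert_if)
      have p2: "indepN ({?a, ?c} \<union> B)" using pairind[of "{(True, i), (True, jj k i)}"] pair2[OF k3 ik] sub
        by (simp add: card_insert_if)
      have p3: "indepN ({?b, ?c} \<union> B)" using pairind[of "{(False, i), (True, jj k i)}"] pair3[OF k3 ik] sub
        by (simp add: card_insert_if)
      have TBE: "{?a, ?b, ?c} \<union> B \<subseteq> E" using TE1 Teq E1E BC CD(1) by blast
      obtain S where S: "S \<subseteq> {?a, ?b, ?c} \<union> B" "S \<noteq> {}" "(\<lambda>i. \<Sum>x\<in>S. v x i) = (\<lambda>i. 0)"
        using nT v[OF TBE] by blast
      have noS: "\<not> S \<subseteq> P \<union> B" if "P \<union> B \<subseteq> E" "indepN (P \<union> B)" for P
        using v[OF that(1)] that(2) S(2,3) by blast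
      have "?a \<in> S" using noS[of "{?b, ?c}"] p3 S(1) TBE by blast
      moreover have "?b \<in> S" using noS[of "{?a, ?c}"] p2 S(1) TBE by blast
      moreover have "?c \<in> S" using noS[of "{?a, ?b}"] p1 S(1) TBE by blast
      ultimately have TS: "{?a, ?b, ?c} \<subseteq> S" by blast
      have "S \<subseteq> E" using S(1) TBE by (rule order_trans)
      then have finS: "finite S" using rs.finE by (rule finite_subset)
      have "S - {?a, ?b, ?c} \<subseteq> B" using S(1) by blast
      moreover have "\<forall>c. (\<Sum>x\<in>{?a, ?b, ?c}. v x c) = (\<Sum>x\<in>S - {?a, ?b, ?c}. v x c)"
      proof
        fix c
        have "S = {?a, ?b, ?c} \<union> (S - {?a, ?b, ?c})" using TS by blast
        then have "(\<Sum>x\<in>S. v x c) = (\<Sum>x\<in>{?a, ?b, ?c}. v x c) + (\<Sum>x\<in>S - {?a, ?b, ?c}. v x c)"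
          using finS by (metis sum.union_disjoint Diff_disjoint finite.emptyI finite.insertI finite_Diff)
        moreover have "(\<Sum>x\<in>S. v x c) = 0" using fun_cong[OF S(3), of c] by simp
        ultimately show "(\<Sum>x\<in>{?a, ?b, ?c}. v x c) = (\<Sum>x\<in>S - {?a, ?b, ?c}. v x c)"
          using bit_eq_of_add0 by metis
      qed
      ultimately show ?thesis unfolding Teq by blast
    qed
    obtain A where A: "A \<subseteq> B"
      "\<forall>c. (\<Sum>i\<in>{..<k}. \<Sum>x\<in>\<phi> ` {(True, i), (False, i), (True, jj k i)}. v x c) = (\<Sum>x\<in>A. v x c)"
      using span_closed[of "{..<k}" B "\<lambda>i c. \<Sum>x\<in>\<phi> ` {(True, i), (False, i), (True, jj k i)}. v x c" v]
        finB tri by blast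
    have sumR: "\<forall>c. (\<Sum>x\<in>R. v x c) = (\<Sum>x\<in>A. v x c)"
      using A(2) tri_sum[OF k3 inj] unfolding R_def by simp
    have indR: "indepN (R \<union> B)" using G1 \<open>indep1 R\<close> RCX by blast
    have RBE: "R \<union> B \<subseteq> E" using RE1 E1E BC CD(1) by blast
    have finR: "finite R" using RE1 E1E rs.finE by (simp add: finite_subset)
    have finA: "finite A" using A(1) finB by (simp add: finite_subset)
    have RA: "R \<inter> A = {}" using RE1 E1E A(1) BC by blast
    have "R \<noteq> {}" using cR k3 by auto
    then have ne: "R \<union> A \<noteq> {}" by blast
    have "(\<lambda>c. \<Sum>x\<in>R \<union> A. v x c) = (\<lambda>c. 0)"
    proof
      fix c
      have "(\<Sum>x\<in>R \<union> A. v x c) = (\<Sum>x\<in>R. v x c) + (\<Sum>x\<in>A. v x c)"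
        using finR finA RA by (rule sum.union_disjoint)
      also have "\<dots> = 0" using sumR bit_self_add by metis
      finally show "(\<Sum>x\<in>R \<union> A. v x c) = 0" .
    qed
    moreover have "R \<union> A \<subseteq> R \<union> B" using A(1) by blast
    ultimately show False using v[OF RBE] indR ne by blast
  qed
  have "\<phi> ` wheel_spokes k \<inter> R = {}"
  proof -
    have "wheel_spokes k \<inter> wheel_rim k = {}" unfolding wheel_spokes_def wheel_rim_def by auto
    then show ?thesis unfolding R_def using inj rimE spE unfolding inj_on_def by blast
  qed
  moreover have "\<phi> ` wheel_spokes k \<inter> C = {}" using spE img E1E by blast
  ultimately show ?thesis using main unfolding R_def by blast
qed

end
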